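(* Let $N=3$ and let $\mathcal A$ be the algebra generated by $L_{ij}$ ($1\le i,j\le3$) subject to $\hat RL_2L_1=L_2L_1\hat R$ with $\hat R$ the braid matrix of type $\hat o(3)$. Then in $\mathcal A$ the six elements $$L_{11}L_{33}+q^{-1/2}L_{21}L_{23}+q^{-1}L_{31}L_{13},\quad q^{1/2}L_{12}L_{32}+L_{22}L_{22}+q^{-1/2}L_{32}L_{12},\quad qL_{13}L_{31}+q^{1/2}L_{23}L_{21}+L_{33}L_{11},$$ $$L_{11}L_{33}+q^{-1/2}L_{12}L_{32}+q^{-1}L_{13}L_{31},\quad q^{1/2}L_{21}L_{23}+L_{22}L_{22}+q^{-1/2}L_{23}L_{21},\quad qL_{31}L_{13}+q^{1/2}L_{32}L_{12}+L_{33}L_{11}$$ are all equal, and their common value $C$ is central in $\mathcal A$ (i.e. $CL_{ij}=L_{ij}C$ for all $i,j$).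
   Context: Fix nonzero complex $q$ with square root $q^{1/2}$. $(ij)$ denotes the $3\times3$ matrix unit, $i'=4-i$, $\rho=(\tfrac12,0,-\tfrac12)$, $P'_0=\sum_{i,j=1}^3q^{\rho_{i'}-\rho_j}(ij)\otimes(i'j')$, and $\hat R=I_9-e^{-\eta}P'_0$ with $e^{\eta}+e^{-\eta}=q+1+q^{-1}$. $L_1=\sum_{i,j}L_{ij}(ij)\otimes I_3$, $L_2=\sum_{k,l}L_{kl}I_3\otimes(kl)$, so $L_2L_1=\sum L_{kl}L_{ij}(ij)\otimes(kl)$. *)

theory Defs
  imports Complex_Main
begin

text \<open>A unital associative complex algebra is rendered as a ring 'a together with a
  unital ring homomorphism sc from the complex numbers into the centre of 'a.\<close>
definition complex_alg :: "(complex \<Rightarrow> 'a::ring_1) \<Rightarrow> bool" where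
  "complex_alg sc \<longleftrightarrow> sc 1 = 1 \<and> (\<forall>a b. sc (a + b) = sc a + sc b)
     \<and> (\<forall>a b. sc (a * b) = sc a * sc b) \<and> (\<forall>a x. sc a * x = x * sc a)"

text \<open>Entry of the 9x9 braid matrix Rhat = I - e^{-eta} P'_0 at row (i,k), column (j,l)
  (basis e_i tensor e_k), where s = q^{1/2}. The factor q^(rho_{i'} - rho_j) equals
  s^(i+j-4) since rho_m = (2-m)/2 and i' = 4-i.\<close>
definition Rhat :: "complex \<Rightarrow> complex \<Rightarrow> nat \<Rightarrow> nat \<Rightarrow> nat \<Rightarrow> nat \<Rightarrow> complex" where
  "Rhat s eta i k j l =
     (if i = j \<and> k = l then 1 else 0)
     - exp (- eta) * (if k = 4 - i \<and> l = 4 - j then s powi (int i + int j - 4) else 0)"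

text \<open>The RLL relation Rhat L2 L1 = L2 L1 Rhat, entrywise; the (i,k),(j,l) entry of
  L2 L1 is L k l * L i j.\<close>
definition RLL_rel :: "(complex \<Rightarrow> 'a::ring_1) \<Rightarrow> complex \<Rightarrow> complex \<Rightarrow> (nat \<Rightarrow> nat \<Rightarrow> 'a) \<Rightarrow> bool" where
  "RLL_rel sc s eta L \<longleftrightarrow>
    (\<forall>i\<in>{1..3}. \<forall>k\<in>{1..3}. \<forall>j\<in>{1..3}. \<forall>l\<in>{1..3}.
      (\<Sum>e\<in>{1..3}. \<Sum>f\<in>{1..3}. sc (Rhat s eta i k e f) * (L f l * L e j))
      = (\<Sum>e\<in>{1..3}. \<Sum>f\<in>{1..3}. (L k f * L i e) * sc (Rhat s eta e f j l)))"

end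

theory Submission
  imports Defs
begin

lemma set3: "{1..3::nat} = {1,2,3}" by auto

lemma sc_facts:
  assumes "complex_alg sc"
  shows "sc 1 = 1" "sc (a + b) = sc a + sc b" "sc (a * b) = sc a * sc b"
    "sc a * x = x * sc a" "sc 0 = 0" "sc (- a) = - sc a" "sc (a - b) = sc a - sc b"
proof -
  show 1: "sc 1 = 1" "sc (a + b) = sc a + sc b" "sc (a * b) = sc a * sc b"
    "sc a * x = x * sc a" using assms unfolding complex_alg_def by blast+
  have add: "\<And>a b. sc (a + b) = sc a + sc b" using assms unfolding complex_alg_def by blast
  have "sc 0 = sc 0 + sc 0" using add[of 0 0] by simp
  then show z: "sc 0 = 0" by simp
  have m: "sc (- c) = - sc c" for c
  proof -
    have "sc c + sc (- c) = 0" using add[of c "-c"] z by simp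
    then show ?thesis by (simp add: eq_neg_iff_add_eq_0 add.commute)
  qed
  show "sc (- a) = - sc a" by (rule m)
  show "sc (a - b) = sc a - sc b" using add[of a "-b"] m[of b] by simp
qed

lemma if_conj0: "(if P \<and> Q then x else 0) = (if P then (if Q then x else 0) else 0)"
  by simp

lemma sum_if_const: "(\<Sum>f\<in>A. if P then g f else 0) = (if P then (\<Sum>f\<in>A. g f) else 0)"
  by simp

lemma sum_delta_pair:
  fixes M :: "nat \<Rightarrow> nat \<Rightarrow> 'a::ring_1"
  assumes "i \<in> {1..3}" "k \<in> {1..3}" "complex_alg sc"
  shows "(\<Sum>e\<in>{1..3}. \<Sum>f\<in>{1..3}. sc (if i = e \<and> k = f then 1 else 0) * M e f) = M i k"
    "(\<Sum>e\<in>{1..3}. \<Sum>f\<in>{1..3}. M e f * sc (if e = i \<and> f = k then 1 else 0)) = M i k"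
  using assms by (simp_all add: sc_facts if_distrib[of sc] if_distrib[of "\<lambda>x. x * _"] if_distrib[of "\<lambda>x. _ * x"] if_conj0 sum_if_const sum.delta sum.delta' cong: if_cong)

definition Pm :: "complex \<Rightarrow> nat \<Rightarrow> nat \<Rightarrow> nat \<Rightarrow> nat \<Rightarrow> complex" where
  "Pm s i k e f = (if k = 4 - i \<and> f = 4 - e then s powi (int i + int e - 4) else 0)"

context
  fixes sc :: "complex \<Rightarrow> 'a::ring_1" and s eta :: complex and L :: "nat \<Rightarrow> nat \<Rightarrow> 'a"
  assumes ca: "complex_alg sc" and RL: "RLL_rel sc s eta L"
begin

lemma E0:
  assumes i: "i \<in> {1..3}" and k: "k \<in> {1..3}" and j: "j \<in> {1..3}" and l: "l \<in> {1..3}"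
  shows "sc (exp (- eta)) * (\<Sum>e\<in>{1..3}. \<Sum>f\<in>{1..3}. sc (Pm s i k e f) * (L f l * L e j))
       = sc (exp (- eta)) * (\<Sum>e\<in>{1..3}. \<Sum>f\<in>{1..3}. (L k f * L i e) * sc (Pm s e f j l))"
proof -
  let ?x = "sc (exp (- eta))"
  have R: "(\<Sum>e\<in>{1..3}. \<Sum>f\<in>{1..3}. sc (Rhat s eta i k e f) * (L f l * L e j))
      = (\<Sum>e\<in>{1..3}. \<Sum>f\<in>{1..3}. (L k f * L i e) * sc (Rhat s eta e f j l))"
    using RL i k j l unfolding RLL_rel_def by blast
  have Rh: "\<And>a b c d. sc (Rhat s eta a b c d) = sc (if a = c \<and> b = d then 1 else 0) - ?x * sc (Pm s a b c d)"
    unfolding Rhat_def Pm_def by (simp only: sc_facts(3,7)[OF ca])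
  have L1: "(\<Sum>e\<in>{1..3}. \<Sum>f\<in>{1..3}. sc (Rhat s eta i k e f) * (L f l * L e j))
     = L k l * L i j - ?x * (\<Sum>e\<in>{1..3}. \<Sum>f\<in>{1..3}. sc (Pm s i k e f) * (L f l * L e j))"
    unfolding Rh left_diff_distrib sum_subtractf
    using sum_delta_pair(1)[OF i k ca, of "\<lambda>e f. L f l * L e j"]
    by (simp add: mult.assoc sum_distrib_left)
  have comm: "\<And>M p. M * (?x * sc p) = ?x * (M * sc p)"
    by (metis mult.assoc sc_facts(4)[OF ca])
  have L2: "(\<Sum>e\<in>{1..3}. \<Sum>f\<in>{1..3}. (L k f * L i e) * sc (Rhat s eta e f j l))
     = L k l * L i j - ?x * (\<Sum>e\<in>{1..3}. \<Sum>f\<in>{1..3}. (L k f * L i e) * sc (Pm s e f j l))"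
    unfolding Rh right_diff_distrib sum_subtractf
    using sum_delta_pair(2)[OF j l ca, of "\<lambda>e f. L k f * L i e"]
    by (simp add: comm sum_distrib_left)
  show ?thesis using R L1 L2 by simp
qed

lemma E1:
  assumes i: "i \<in> {1..3}" and k: "k \<in> {1..3}" and j: "j \<in> {1..3}" and l: "l \<in> {1..3}"
  shows "(\<Sum>e\<in>{1..3}. \<Sum>f\<in>{1..3}. sc (Pm s i k e f) * (L f l * L e j))
       = (\<Sum>e\<in>{1..3}. \<Sum>f\<in>{1..3}. (L k f * L i e) * sc (Pm s e f j l))"
proof -
  have one: "sc (exp eta) * sc (exp (- eta)) = 1"
    using sc_facts(3,1)[OF ca] by (metis exp_minus_inverse)
  have "sc (exp eta) * (sc (exp (- eta)) * (\<Sum>e\<in>{1..3}. \<Sum>f\<in>{1..3}. sc (Pm s i k e f) * (L f l * L e j)))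
       = sc (exp eta) * (sc (exp (- eta)) * (\<Sum>e\<in>{1..3}. \<Sum>f\<in>{1..3}. (L k f * L i e) * sc (Pm s e f j l)))"
    using E0[OF i k j l] by (rule arg_cong)
  then show ?thesis unfolding mult.assoc[symmetric] one mult_1 .
qed

lemma E:
  assumes i: "i \<in> {1..3}" and k: "k \<in> {1..3}" and j: "j \<in> {1..3}" and l: "l \<in> {1..3}"
  shows "(if k = 4 - i then (\<Sum>e\<in>{1..3}. sc (s powi (int i + int e - 4)) * (L (4 - e) l * L e j)) else 0)
       = (if l = 4 - j then (\<Sum>e\<in>{1..3}. (L k (4 - e) * L i e) * sc (s powi (int e + int j - 4))) else 0)"
  using E1[OF i k j l] unfolding set3 Pm_def
  by (cases "k = 4 - i"; cases "l = 4 - j") (simp_all add: sc_facts(1-3,5-7)[OF ca] if_distrib[of sc] if_distrib[of "\<lambda>x. x * _"] if_distrib[of "\<lambda>x. _ * x"] cong: if_cong)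

end

context
  fixes sc :: "complex \<Rightarrow> 'a::ring_1" and s eta :: complex and L :: "nat \<Rightarrow> nat \<Rightarrow> 'a"
  assumes ca: "complex_alg sc" and RL: "RLL_rel sc s eta L" and s0: "s \<noteq> 0"
begin

definition w :: "int \<Rightarrow> 'a" where "w n = sc (s powi n)"

lemma w_mult: "w a * w b = w (a + b)"
  unfolding w_def using s0 by (simp add: sc_facts(3)[OF ca, symmetric] power_int_add)

lemma w_0[simp]: "w 0 = 1" unfolding w_def by (simp add: sc_facts(1)[OF ca])

lemma w_comm: "w a * x = x * w a" unfolding w_def by (rule sc_facts(4)[OF ca])

definition Am where "Am l j = (\<Sum>e\<in>{1..3}. w (int e - 2) * (L (4 - e) l * L e j))"
definition Bm where "Bm k i = (\<Sum>e\<in>{1..3}. (L k (4 - e) * L i e) * w (int e - 2))"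

lemma E':
  assumes i: "i \<in> {1..3}" and k: "k \<in> {1..3}" and j: "j \<in> {1..3}" and l: "l \<in> {1..3}"
  shows "(if k = 4 - i then w (int i - 2) * Am l j else 0) = (if l = 4 - j then Bm k i * w (int j - 2) else 0)"
proof -
  have 1: "(\<Sum>e\<in>{1..3}. sc (s powi (int i + int e - 4)) * (L (4 - e) l * L e j)) = w (int i - 2) * Am l j"
    unfolding Am_def sum_distrib_left
  proof (rule sum.cong)
    fix e assume "e \<in> {1..3::nat}"
    have "sc (s powi (int i + int e - 4)) = w (int i - 2) * w (int e - 2)"
      unfolding w_mult by (simp add: w_def algebra_simps)
    then show "sc (s powi (int i + int e - 4)) * (L (4 - e) l * L e j) = w (int i - 2) * (w (int e - 2) * (L (4 - e) l * L e j))"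
      by (simp add: mult.assoc)
  qed simp
  have 2: "(\<Sum>e\<in>{1..3}. (L k (4 - e) * L i e) * sc (s powi (int e + int j - 4))) = Bm k i * w (int j - 2)"
    unfolding Bm_def sum_distrib_right
  proof (rule sum.cong)
    fix e assume "e \<in> {1..3::nat}"
    have "sc (s powi (int e + int j - 4)) = w (int e - 2) * w (int j - 2)"
      unfolding w_mult by (simp add: w_def algebra_simps)
    then show "(L k (4 - e) * L i e) * sc (s powi (int e + int j - 4)) = (L k (4 - e) * L i e) * w (int e - 2) * w (int j - 2)"
      by (simp add: mult.assoc)
  qed simp
  show ?thesis using E[OF ca RL i k j l] unfolding 1 2 .
qed

definition C0 where "C0 = L 1 1 * L 3 3 + w (-1) * (L 2 1 * L 2 3) + w (-2) * (L 3 1 * L 1 3)"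

lemma C0_eq: "w (-1) * Am 1 3 = C0"
  unfolding Am_def set3 C0_def by (simp add: distrib_left mult.assoc[symmetric] w_mult add_ac)

lemma Bm_eq:
  assumes i: "i \<in> {1..3}" and k: "k \<in> {1..3}"
  shows "Bm k i = (if k = 4 - i then w (int i - 2) * C0 else 0)"
proof (cases "k = 4 - i")
  case True
  have "w (int i - 2) * Am 1 3 = Bm k i * w 1"
    using E'[OF i k, of 3 1] True by simp
  then have "w (int i - 2) * Am 1 3 * w (-1) = Bm k i"
    by (simp add: mult.assoc w_mult)
  moreover have "w (int i - 2) * Am 1 3 * w (-1) = w (int i - 2) * (w (-1) * Am 1 3)"
    using w_comm[of "-1" "Am 1 3"] by (simp only: mult.assoc)
  ultimately show ?thesis using True C0_eq by simp
next
  case False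
  then show ?thesis using E'[OF i k, of 2 2] by simp
qed

lemma Am_eq:
  assumes j: "j \<in> {1..3}" and l: "l \<in> {1..3}"
  shows "Am l j = (if l = 4 - j then w (int j - 2) * C0 else 0)"
proof (cases "l = 4 - j")
  case True
  have "Am l j = Bm 2 2 * w (int j - 2)"
    using E'[of 2 2 j l] j l True by simp
  then show ?thesis using True Bm_eq[of 2 2] by (simp add: w_comm)
next
  case False
  then show ?thesis using E'[of 2 2 j l] j l by simp
qed

lemma trip: "w a * (X * Y * w b * Z) = w b * (X * (w a * (Y * Z)))"
proof -
  have "X * Y * w b * Z = w b * (X * Y * Z)" by (metis mult.assoc w_comm)
  moreover have "X * (w a * (Y * Z)) = w a * (X * Y * Z)" by (metis mult.assoc w_comm)
  ultimately show ?thesis by (metis mult.assoc w_comm w_mult add.commute)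
qed

lemma aux: "w a * (X * (w b * Y)) = w a * w b * (X * Y)"
proof -
  have "X * (w b * Y) = w b * (X * Y)" by (metis mult.assoc w_comm)
  then show ?thesis by (simp add: mult.assoc)
qed

lemma Am_alt: "(\<Sum>x\<in>{1..3}. w (2 - int x) * (L x l * L (4 - x) j)) = Am l j"
  unfolding Am_def set3 by (simp add: add_ac)

lemma central:
  assumes k: "k \<in> {1..3}" and j: "j \<in> {1..3}"
  shows "C0 * L k j = L k j * C0"
proof -
  define T where "T = (\<Sum>x\<in>{1..3}. w (2 - int x) * (Bm k x * L (4 - x) j))"
  have "T = (\<Sum>x\<in>{1..3}. \<Sum>y\<in>{1..3}. w (2 - int x) * (L k (4 - y) * L x y * w (int y - 2) * L (4 - x) j))"
    unfolding T_def Bm_def by (simp add: sum_distrib_left sum_distrib_right)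
  also have "\<dots> = (\<Sum>y\<in>{1..3}. \<Sum>x\<in>{1..3}. w (int y - 2) * (L k (4 - y) * (w (2 - int x) * (L x y * L (4 - x) j))))"
    by (subst sum.swap) (simp add: trip)
  also have "\<dots> = (\<Sum>y\<in>{1..3}. w (int y - 2) * (L k (4 - y) * Am y j))"
    by (simp add: sum_distrib_left Am_alt[symmetric])
  finally have TR: "T = (\<Sum>y\<in>{1..3}. w (int y - 2) * (L k (4 - y) * Am y j))" .
  have T1: "T = C0 * L k j"
  proof -
    have "T = (\<Sum>x\<in>{1..3}. w (2 - int x) * ((if k = 4 - x then w (int x - 2) * C0 else 0) * L (4 - x) j))"
      unfolding T_def using Bm_eq k by (intro sum.cong) auto
    then show ?thesis using k unfolding set3
      by (auto simp: mult.assoc[symmetric] w_mult)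
  qed
  have T2: "T = L k j * C0"
  proof -
    have "T = (\<Sum>y\<in>{1..3}. w (int y - 2) * (L k (4 - y) * (if y = 4 - j then w (int j - 2) * C0 else 0)))"
      unfolding TR using Am_eq j by (intro sum.cong) auto
    also have "\<dots> = (\<Sum>y\<in>{1..3}. (if y = 4 - j then w (int y - 2) * w (int j - 2) * (L k (4 - y) * C0) else 0))"
      by (intro sum.cong) (auto simp: aux)
    finally show ?thesis using j unfolding set3
      by (auto simp: w_mult)
  qed
  show ?thesis using T1 T2 by simp
qed

lemma ws: "sc s = w 1" "sc (inverse s) = w (-1)" "sc (s ^ 2) = w 2" "sc (inverse (s ^ 2)) = w (-2)"
  unfolding w_def by (simp_all add: power_int_minus)

lemma Bm_alt: "Bm k i = (\<Sum>e\<in>{1..3}. w (int e - 2) * (L k (4 - e) * L i e))"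
  unfolding Bm_def by (simp add: w_comm)

lemma final_eqs:
  "sc s * (L 1 2 * L 3 2) + L 2 2 * L 2 2 + sc (inverse s) * (L 3 2 * L 1 2) = C0
    \<and> sc (s^2) * (L 1 3 * L 3 1) + sc s * (L 2 3 * L 2 1) + L 3 3 * L 1 1 = C0
    \<and> L 1 1 * L 3 3 + sc (inverse s) * (L 1 2 * L 3 2) + sc (inverse (s^2)) * (L 1 3 * L 3 1) = C0
    \<and> sc s * (L 2 1 * L 2 3) + L 2 2 * L 2 2 + sc (inverse s) * (L 2 3 * L 2 1) = C0
    \<and> sc (s^2) * (L 3 1 * L 1 3) + sc s * (L 3 2 * L 1 2) + L 3 3 * L 1 1 = C0"
proof (intro conjI)
  have a1: "Am 2 2 = C0" using Am_eq[of 2 2] by simp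
  then show "sc s * (L 1 2 * L 3 2) + L 2 2 * L 2 2 + sc (inverse s) * (L 3 2 * L 1 2) = C0"
    unfolding ws Am_def set3 by (simp add: add_ac)
  have a2: "w 1 * Am 3 1 = C0" using Am_eq[of 1 3] by (simp add: mult.assoc[symmetric] w_mult)
  then show "sc (s^2) * (L 1 3 * L 3 1) + sc s * (L 2 3 * L 2 1) + L 3 3 * L 1 1 = C0"
    unfolding ws Am_def set3 by (simp add: distrib_left mult.assoc[symmetric] w_mult add_ac)
  have b3: "w (-1) * Bm 1 3 = C0" using Bm_eq[of 3 1] by (simp add: mult.assoc[symmetric] w_mult)
  then show "L 1 1 * L 3 3 + sc (inverse s) * (L 1 2 * L 3 2) + sc (inverse (s^2)) * (L 1 3 * L 3 1) = C0"
    unfolding ws Bm_alt set3 by (simp add: distrib_left mult.assoc[symmetric] w_mult add_ac)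
  have b2: "Bm 2 2 = C0" using Bm_eq[of 2 2] by simp
  then show "sc s * (L 2 1 * L 2 3) + L 2 2 * L 2 2 + sc (inverse s) * (L 2 3 * L 2 1) = C0"
    unfolding ws Bm_alt set3 by (simp add: add_ac)
  have b1: "w 1 * Bm 3 1 = C0" using Bm_eq[of 1 3] by (simp add: mult.assoc[symmetric] w_mult)
  then show "sc (s^2) * (L 3 1 * L 1 3) + sc s * (L 3 2 * L 1 2) + L 3 3 * L 1 1 = C0"
    unfolding ws Bm_alt set3 by (simp add: distrib_left mult.assoc[symmetric] w_mult add_ac)
qed

end

theorem mainTheorem5:
  fixes q s eta :: complex and sc :: "complex \<Rightarrow> 'a::ring_1" and L :: "nat \<Rightarrow> nat \<Rightarrow> 'a"
  assumes "q \<noteq> 0" and "s ^ 2 = q"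
    and "exp eta + exp (- eta) = q + 1 + inverse q"
    and "complex_alg sc"
    and "RLL_rel sc s eta L"
  defines "C \<equiv> L 1 1 * L 3 3 + sc (inverse s) * (L 2 1 * L 2 3) + sc (inverse q) * (L 3 1 * L 1 3)"
  shows "sc s * (L 1 2 * L 3 2) + L 2 2 * L 2 2 + sc (inverse s) * (L 3 2 * L 1 2) = C
    \<and> sc q * (L 1 3 * L 3 1) + sc s * (L 2 3 * L 2 1) + L 3 3 * L 1 1 = C
    \<and> L 1 1 * L 3 3 + sc (inverse s) * (L 1 2 * L 3 2) + sc (inverse q) * (L 1 3 * L 3 1) = C
    \<and> sc s * (L 2 1 * L 2 3) + L 2 2 * L 2 2 + sc (inverse s) * (L 2 3 * L 2 1) = C
    \<and> sc q * (L 3 1 * L 1 3) + sc s * (L 3 2 * L 1 2) + L 3 3 * L 1 1 = C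
    \<and> (\<forall>i\<in>{1..3}. \<forall>j\<in>{1..3}. C * L i j = L i j * C)"
proof -
  have s0: "s \<noteq> 0" using assms(1,2) by auto
  have CC: "C = C0 sc s L"
    unfolding C_def C0_def[OF assms(4,5) s0] ws[OF assms(4,5) s0, symmetric] assms(2)[symmetric]
    by (simp add: add_ac)
  show ?thesis
    using final_eqs[OF assms(4,5) s0] central[OF assms(4,5) s0] unfolding CC assms(2)[symmetric]
    by blast
qed

end
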